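(* Let $H$ be a fixed connected graph with $k=|V(H)|>1$. Let $G$ be an online graph with vertices $v_1,\dots,v_n$ (in order of appearance) and let $b_1,\dots,b_n\in\{0,1\}$ be advice bits with $b_t$ assigned to $v_t$. Suppose every induced copy of $H$ in $G$ contains at least one vertex $v_t$ with $b_t=1$. Then there is an online graph $G'$ with vertices $v_1,\dots,v_n,v_{n+1},\dots,v_{n'}$ such that $G'_n=G$ (the first $n$ revealed vertices of $G'$ induce exactly $G$), and the advice sequence $b'$ defined by $b'_t=b_t$ for $t\le n$ and $b'_t=0$ for $t>n$ is correct for $G'$ and is the only correct advice for $G'$; that is, the set $\{v_t: b_t=1\}$ is the unique minimum-size set $S\subseteq V(G')$ such that $G'-S$ is $H$-free.
   Context: All graphs are finite, simple and undirected. An induced copy of $H$ in $G$ is an induced subgraph isomorphic to $H$; $G$ is $H$-free if it has none. For $S\subseteq V(G)$, $G-S=G[V(G)\setminus S]$. An online graph has its vertices revealed one at a time, with $G_t$ denoting the subgraph induced by the first $t$ revealed vertices. Advice (predictions) assigns one bit to each vertex; it is correct for a graph if the set of vertices with bit $1$ is a minimum-size set $S$ with $G-S$ $H$-free. *)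

theory Defs
  imports Main
begin

definition simple_graph :: "'a set \<Rightarrow> ('a \<Rightarrow> 'a \<Rightarrow> bool) \<Rightarrow> bool" where
  "simple_graph V E \<longleftrightarrow> finite V \<and> (\<forall>u v. E u v \<longrightarrow> u \<in> V \<and> v \<in> V)
     \<and> (\<forall>u v. E u v \<longrightarrow> E v u) \<and> (\<forall>u. \<not> E u u)"

definition connected_graph :: "'a set \<Rightarrow> ('a \<Rightarrow> 'a \<Rightarrow> bool) \<Rightarrow> bool" where
  "connected_graph V E \<longleftrightarrow> V \<noteq> {} \<and> (\<forall>u\<in>V. \<forall>v\<in>V. E\<^sup>*\<^sup>* u v)"

definition induced_copy ::
  "'a set \<Rightarrow> ('a \<Rightarrow> 'a \<Rightarrow> bool) \<Rightarrow> 'b set \<Rightarrow> ('b \<Rightarrow> 'b \<Rightarrow> bool) \<Rightarrow> 'a set \<Rightarrow> bool" where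
  "induced_copy V E VH EH X \<longleftrightarrow> X \<subseteq> V \<and>
     (\<exists>f. bij_betw f VH X \<and> (\<forall>u\<in>VH. \<forall>v\<in>VH. EH u v \<longleftrightarrow> E (f u) (f v)))"

definition H_free :: "'a set \<Rightarrow> ('a \<Rightarrow> 'a \<Rightarrow> bool) \<Rightarrow> 'b set \<Rightarrow> ('b \<Rightarrow> 'b \<Rightarrow> bool) \<Rightarrow> bool" where
  "H_free V E VH EH \<longleftrightarrow> \<not> (\<exists>X. induced_copy V E VH EH X)"

definition deletion_set ::
  "'a set \<Rightarrow> ('a \<Rightarrow> 'a \<Rightarrow> bool) \<Rightarrow> 'b set \<Rightarrow> ('b \<Rightarrow> 'b \<Rightarrow> bool) \<Rightarrow> 'a set \<Rightarrow> bool" where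
  "deletion_set V E VH EH S \<longleftrightarrow> S \<subseteq> V \<and> H_free (V - S) E VH EH"

definition min_deletion_set ::
  "'a set \<Rightarrow> ('a \<Rightarrow> 'a \<Rightarrow> bool) \<Rightarrow> 'b set \<Rightarrow> ('b \<Rightarrow> 'b \<Rightarrow> bool) \<Rightarrow> 'a set \<Rightarrow> bool" where
  "min_deletion_set V E VH EH S \<longleftrightarrow> deletion_set V E VH EH S \<and>
     (\<forall>T. deletion_set V E VH EH T \<longrightarrow> card S \<le> card T)"

definition correct_advice ::
  "'a set \<Rightarrow> ('a \<Rightarrow> 'a \<Rightarrow> bool) \<Rightarrow> 'b set \<Rightarrow> ('b \<Rightarrow> 'b \<Rightarrow> bool) \<Rightarrow> ('a \<Rightarrow> bool) \<Rightarrow> bool" where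
  "correct_advice V E VH EH b \<longleftrightarrow> min_deletion_set V E VH EH {v \<in> V. b v}"

end

theory Submission
  imports Defs
begin

lemma conn_const:
  assumes H: "simple_graph VH EH" and C: "connected_graph VH EH"
    and e: "\<And>u u'. u\<in>VH \<Longrightarrow> u'\<in>VH \<Longrightarrow> EH u u' \<Longrightarrow> g u = g u'"
    and u: "u\<in>VH" and u': "u'\<in>VH"
  shows "g u = g u'"
proof -
  have "EH\<^sup>*\<^sup>* u u'" using C u u' unfolding connected_graph_def by blast
  then have "u' \<in> VH \<and> g u = g u'"
  proof (induction rule: rtranclp_induct)
    case base then show ?case using u by simp
  next
    case (step y z)
    have "y \<in> VH" "z \<in> VH" using step(2) H unfolding simple_graph_def by blast+
    then show ?case using step e by metis
  qed
  then show ?thesis by simp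
qed

lemma dec_div: "j < (K::nat) \<Longrightarrow> (c*K + j) div K = c"
  by simp
lemma dec_mod: "j < (K::nat) \<Longrightarrow> (c*K + j) mod K = j"
  by simp

lemma blk_bound:
  assumes "v < (n::nat)" "i < m" "j < K"
  shows "(v*m+i)*K + j < n*m*K"
proof -
  have "v*m + i + 1 \<le> n*m"
  proof -
    have "v*m+i+1 \<le> v*m + m" using assms by simp
    also have "\<dots> = (v+1)*m" by simp
    also have "\<dots> \<le> n*m" using assms by (intro mult_le_mono1) simp
    finally show ?thesis .
  qed
  then have "(v*m+i+1)*K \<le> n*m*K" by (intro mult_le_mono1)
  moreover have "(v*m+i)*K + j < (v*m+i+1)*K" using assms by simp
  ultimately show ?thesis by linarith
qed

theorem mainTheorem6:
  fixes VH :: "'b set" and EH :: "'b \<Rightarrow> 'b \<Rightarrow> bool"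
    and n :: nat and E :: "nat \<Rightarrow> nat \<Rightarrow> bool" and b :: "nat \<Rightarrow> bool"
  assumes H: "simple_graph VH EH" and Hconn: "connected_graph VH EH"
    and Hk: "card VH > 1"
    and G: "simple_graph {0..<n} E"
    and hit: "\<And>X. induced_copy {0..<n} E VH EH X \<Longrightarrow> \<exists>t\<in>X. b t"
  shows "\<exists>n' E'. n \<le> n' \<and> simple_graph {0..<n'} E'
           \<and> (\<forall>u v. u < n \<and> v < n \<longrightarrow> (E' u v \<longleftrightarrow> E u v))
           \<and> correct_advice {0..<n'} E' VH EH (\<lambda>t. t < n \<and> b t)
           \<and> (\<forall>c. correct_advice {0..<n'} E' VH EH c \<longrightarrow>
                   (\<forall>t < n'. c t \<longleftrightarrow> (t < n \<and> b t)))
           \<and> (\<forall>S. min_deletion_set {0..<n'} E' VH EH S \<longleftrightarrow> S = {t. t < n \<and> b t})"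
proof -
  define k where "k = card VH"
  have finH: "finite VH" using H unfolding simple_graph_def by blast
  obtain h where h: "bij_betw h {0..<k} VH" using ex_bij_betw_nat_finite[OF finH] k_def by blast
  have injh: "inj_on h {0..<k}" and imh: "h ` {0..<k} = VH"
    using h by (auto simp: bij_betw_def)
  define K where "K = k - 1"
  have K: "K > 0" using Hk k_def K_def by simp
  have kK: "k = Suc K" using Hk k_def K_def by simp
  define m where "m = Suc n"
  define n' where "n' = n + n*m*K"
  define w where "w = h 0"
  define blk where "blk = (\<lambda>x. (x - n) div K)"
  define pos where "pos = (\<lambda>x. Suc ((x - n) mod K))"
  define E' where "E' = (\<lambda>x y. x < n' \<and> y < n' \<and> (
     (x < n \<and> y < n \<and> E x y) \<or>
     (n \<le> x \<and> n \<le> y \<and> blk x = blk y \<and> b (blk x div m) \<and> EH (h (pos x)) (h (pos y))) \<or>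
     (x < n \<and> n \<le> y \<and> b x \<and> blk y div m = x \<and> EH w (h (pos y))) \<or>
     (y < n \<and> n \<le> x \<and> b y \<and> blk x div m = y \<and> EH (h (pos x)) w)))"
  define B where "B = {t. t < n \<and> b t}"
  define V' where "V' = {0..<n'}"
  have posk: "pos x < k" for x using K kK unfolding pos_def by simp
  have hposV: "h (pos x) \<in> VH" for x using posk imh by auto
  have wV: "w \<in> VH" using imh kK w_def by auto
  have EHirr: "\<not> EH u u" for u using H unfolding simple_graph_def by blast
  have EHsym: "EH u v \<Longrightarrow> EH v u" for u v using H unfolding simple_graph_def by blast
  have Eirr: "\<not> E u u" for u using G unfolding simple_graph_def by blast
  have Esym: "E u v \<Longrightarrow> E v u" for u v using G unfolding simple_graph_def by blast
  have nn': "n \<le> n'" unfolding n'_def by simp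
  have sg: "simple_graph V' E'"
    unfolding simple_graph_def V'_def
  proof (intro conjI allI impI)
    fix u v assume "E' u v" then show "u \<in> {0..<n'}" "v \<in> {0..<n'}" unfolding E'_def by auto
  next
    fix u v assume "E' u v" then show "E' v u" unfolding E'_def by (elim conjE disjE) (auto intro: EHsym Esym)
  next
    fix u show "\<not> E' u u" unfolding E'_def using EHirr Eirr by auto
  qed simp
  have agree: "\<forall>u v. u < n \<and> v < n \<longrightarrow> (E' u v \<longleftrightarrow> E u v)"
    unfolding E'_def using nn' by auto
  have BV: "B \<subseteq> V'" unfolding B_def V'_def using nn' by auto
  have cardB: "card B \<le> n"
  proof -
    have "card B \<le> card {0..<n}" by (rule card_mono) (auto simp: B_def)
    then show ?thesis by simp
  qed
  have finV: "finite V'" unfolding V'_def by simp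
  have dec: "j < K \<Longrightarrow> blk (n + c*K + j) = c \<and> pos (n + c*K + j) = Suc j" for c j
    unfolding blk_def pos_def by simp
  have BHfree: "H_free (V' - B) E' VH EH"
    unfolding H_free_def
  proof
    assume "\<exists>X. induced_copy (V' - B) E' VH EH X"
    then obtain X f where XV: "X \<subseteq> V' - B" and bf: "bij_betw f VH X"
        and ef: "\<forall>u\<in>VH. \<forall>v\<in>VH. EH u v \<longleftrightarrow> E' (f u) (f v)"
      unfolding induced_copy_def by blast
    have fX: "u \<in> VH \<Longrightarrow> f u \<in> X" for u using bf bij_betwE by blast
    have Xim: "X = f ` VH" using bf by (simp add: bij_betw_def)
    define \<phi> where "\<phi> = (\<lambda>x. if x < n then None else Some (blk x))"
    have const: "(\<phi> \<circ> f) u = (\<phi> \<circ> f) u'" if "u \<in> VH" "u' \<in> VH" for u u'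
    proof (rule conn_const[OF H Hconn _ that])
      fix a a' assume a: "a \<in> VH" "a' \<in> VH" "EH a a'"
      then have e: "E' (f a) (f a')" using ef by blast
      have "f a \<notin> B" "f a' \<notin> B" using fX a XV by auto
      then show "(\<phi> \<circ> f) a = (\<phi> \<circ> f) a'" using e unfolding \<phi>_def E'_def B_def by auto
    qed
    obtain u0 where u0: "u0 \<in> VH" using Hk by (metis card.empty ex_in_conv not_less_zero)
    show False
    proof (cases "f u0 < n")
      case True
      then have all: "u \<in> VH \<Longrightarrow> f u < n" for u using const[OF u0, of u] unfolding \<phi>_def
        by (auto split: if_splits)
      have "induced_copy {0..<n} E VH EH X"
        unfolding induced_copy_def
      proof (intro conjI exI)
        show "X \<subseteq> {0..<n}" using all Xim by auto
        show "bij_betw f VH X" by (rule bf)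
        show "\<forall>u\<in>VH. \<forall>v\<in>VH. EH u v = E (f u) (f v)" using ef agree all by blast
      qed
      then obtain t where "t \<in> X" "b t" using hit by blast
      moreover have "t < n" using \<open>t \<in> X\<close> Xim all by auto
      ultimately show False using XV unfolding B_def by auto
    next
      case False
      then have all: "u \<in> VH \<Longrightarrow> n \<le> f u \<and> blk (f u) = blk (f u0)" for u
        using const[OF u0, of u] unfolding \<phi>_def by (auto split: if_splits)
      have inj: "inj_on (\<lambda>y. (y - n) mod K) X"
      proof (rule inj_onI)
        fix y y' assume y: "y \<in> X" "y' \<in> X" and md: "(y - n) mod K = (y' - n) mod K"
        obtain u u' where "u \<in> VH" "u' \<in> VH" "y = f u" "y' = f u'" using y Xim by auto
        then have "n \<le> y" "n \<le> y'" "blk y = blk y'" using all by auto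
        then have "(y - n) div K = (y' - n) div K" unfolding blk_def by simp
        then have "y - n = y' - n" using md by (metis div_mult_mod_eq)
        then show "y = y'" using \<open>n \<le> y\<close> \<open>n \<le> y'\<close> by simp
      qed
      have "card X \<le> card {0..<K}"
        by (rule card_inj_on_le[OF inj]) (use K in auto)
      moreover have "card X = k" using bf k_def bij_betw_same_card by metis
      ultimately show False using kK by simp
    qed
  qed
  have Bdel: "deletion_set V' E' VH EH B" unfolding deletion_set_def using BV BHfree by simp
  define hinv where "hinv = the_inv_into {0..<k} h"
  have hinv: "hinv u < k \<and> h (hinv u) = u" if "u \<in> VH" for u
    using that injh imh unfolding hinv_def
    by (metis atLeastLessThan_iff f_the_inv_into_f subsetI the_inv_into_into)
  have hinvh: "j < k \<Longrightarrow> hinv (h j) = j" for j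
    using injh unfolding hinv_def by (simp add: the_inv_into_f_f)
  have hinv0: "u \<in> VH \<Longrightarrow> u \<noteq> w \<Longrightarrow> hinv u \<noteq> 0" for u
    using hinv w_def by metis
  have pendant: "\<exists>X. induced_copy V' E' VH EH X \<and> (\<forall>t\<in>X. t = v \<or> (n \<le> t \<and> blk t = v*m+i))"
    if v: "v < n" "b v" and i: "i < m" for v i
  proof -
    define f where "f = (\<lambda>u. if u = w then v else n + (v*m+i)*K + (hinv u - 1))"
    have fnew: "n \<le> f u \<and> f u < n' \<and> blk (f u) = v*m+i \<and> h (pos (f u)) = u"
      if uV: "u \<in> VH" and uw: "u \<noteq> w" for u
    proof -
      obtain j where j: "hinv u = Suc j" using hinv0[OF uV uw] not0_implies_Suc by blast
      have jK: "j < K" using j hinv[OF uV] kK by simp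
      have fu: "f u = n + (v*m+i)*K + j" using uw j f_def by simp
      have lt: "(v*m+i)*K + j < n*m*K" using blk_bound[OF v(1) i jK] .
      have "f u < n'" using lt fu n'_def by linarith
      then show ?thesis using dec[OF jK, of "v*m+i"] j hinv[OF uV] fu by simp
    qed
    have fw: "f w = v" unfolding f_def by simp
    have vn': "v < n'" using v nn' by simp
    have mdiv: "(v*m+i) div m = v" using i by simp
    have inj: "inj_on f VH"
    proof (rule inj_onI)
      fix u u' assume u: "u \<in> VH" "u' \<in> VH" "f u = f u'"
      show "u = u'"
      proof (cases "u = w"; cases "u' = w")
        assume "u = w" "u' \<noteq> w" then show ?thesis using fnew[of u'] u fw v by force
      next
        assume "u \<noteq> w" "u' = w" then show ?thesis using fnew[of u] u fw v by force
      next
        assume "u \<noteq> w" "u' \<noteq> w" then show ?thesis using fnew[of u] fnew[of u'] u by metis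
      qed simp
    qed
    have edges: "EH u u' \<longleftrightarrow> E' (f u) (f u')" if u: "u \<in> VH" "u' \<in> VH" for u u'
    proof (cases "u = w"; cases "u' = w")
      assume "u = w" "u' = w" then show ?thesis using EHirr fw unfolding E'_def using Eirr by auto
    next
      assume a: "u = w" "u' \<noteq> w"
      then show ?thesis using fnew[OF u(2) a(2)] fw vn' v mdiv unfolding E'_def by auto
    next
      assume a: "u \<noteq> w" "u' = w"
      then show ?thesis using fnew[OF u(1) a(1)] fw vn' v mdiv unfolding E'_def by auto
    next
      assume a: "u \<noteq> w" "u' \<noteq> w"
      then show ?thesis using fnew[OF u(1) a(1)] fnew[OF u(2) a(2)] v mdiv unfolding E'_def by auto
    qed
    show ?thesis
    proof (intro exI conjI)
      show "induced_copy V' E' VH EH (f ` VH)"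
        unfolding induced_copy_def
      proof (intro conjI exI)
        show "f ` VH \<subseteq> V'" using fnew fw vn' unfolding V'_def by fastforce
        show "bij_betw f VH (f ` VH)" using inj by (simp add: bij_betw_def)
        show "\<forall>u\<in>VH. \<forall>v\<in>VH. EH u v = E' (f u) (f v)" using edges by blast
      qed
      show "\<forall>t\<in>f ` VH. t = v \<or> n \<le> t \<and> blk t = v * m + i" using fnew fw by fastforce
    qed
  qed
  have key: "B \<subseteq> T \<or> m \<le> card T" if T: "deletion_set V' E' VH EH T" for T
  proof (rule ccontr)
    assume "\<not> (B \<subseteq> T \<or> m \<le> card T)"
    then obtain v where vB: "v \<in> B" "v \<notin> T" and small: "card T < m" by auto
    have TV: "T \<subseteq> V'" and Tfree: "H_free (V' - T) E' VH EH" using T unfolding deletion_set_def by auto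
    have finT: "finite T" using TV finV finite_subset by blast
    have "\<forall>i\<in>{0..<m}. \<exists>t. t \<in> T \<and> blk t = v*m+i"
    proof
      fix i assume "i \<in> {0..<m}"
      then obtain X where X: "induced_copy V' E' VH EH X" "\<forall>t\<in>X. t = v \<or> (n \<le> t \<and> blk t = v*m+i)"
        using pendant[of v i] vB unfolding B_def by auto
      show "\<exists>t. t \<in> T \<and> blk t = v*m+i"
      proof (rule ccontr)
        assume nt: "\<not> (\<exists>t. t \<in> T \<and> blk t = v*m+i)"
        have "X \<subseteq> V' - T" using X nt vB unfolding induced_copy_def by auto
        then have "induced_copy (V' - T) E' VH EH X" using X(1) unfolding induced_copy_def by blast
        then show False using Tfree unfolding H_free_def by blast
      qed
    qed
    then obtain g where g: "\<forall>i\<in>{0..<m}. g i \<in> T \<and> blk (g i) = v*m+i" by metis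
    have "inj_on g {0..<m}"
    proof (rule inj_onI)
      fix i j assume "i \<in> {0..<m}" "j \<in> {0..<m}" "g i = g j"
      then have "v*m+i = v*m+j" using g by metis
      then show "i = j" by simp
    qed
    then have "card {0..<m} \<le> card T" by (rule card_inj_on_le) (use g finT in auto)
    then show False using small by simp
  qed
  have Bmin: "min_deletion_set V' E' VH EH B"
    unfolding min_deletion_set_def
  proof (intro conjI allI impI)
    show "deletion_set V' E' VH EH B" by (rule Bdel)
    fix T assume T: "deletion_set V' E' VH EH T"
    have finT: "finite T" using T finV finite_subset unfolding deletion_set_def by blast
    show "card B \<le> card T"
      using key[OF T] card_mono[OF finT] cardB m_def by fastforce
  qed
  have uniq: "S = B" if S: "min_deletion_set V' E' VH EH S" for S
  proof -
    have Sd: "deletion_set V' E' VH EH S" and le: "card S \<le> card B"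
      using S Bdel unfolding min_deletion_set_def by auto
    have finS: "finite S" using Sd finV finite_subset unfolding deletion_set_def by blast
    have "B \<subseteq> S" using key[OF Sd] le cardB m_def by auto
    moreover have "card B \<le> card S" using Bmin Sd unfolding min_deletion_set_def by auto
    ultimately show "S = B" using card_subset_eq[OF finS] le by (metis antisym)
  qed
  have Beq: "{v \<in> V'. v < n \<and> b v} = B" using BV unfolding B_def by auto
  show ?thesis
  proof (intro exI conjI allI impI)
    show "n \<le> n'" by (rule nn')
    show "simple_graph {0..<n'} E'" using sg V'_def by simp
    show "\<And>u v. u < n \<and> v < n \<Longrightarrow> E' u v = E u v" using agree by blast
    show "correct_advice {0..<n'} E' VH EH (\<lambda>t. t < n \<and> b t)"
      unfolding correct_advice_def using Bmin Beq V'_def by simp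
    fix c t assume c: "correct_advice {0..<n'} E' VH EH c" and t: "t < n'"
    then have "{v \<in> V'. c v} = B" using uniq unfolding correct_advice_def V'_def by simp
    then show "c t = (t < n \<and> b t)" using t unfolding V'_def B_def by auto
  next
    fix S
    show "min_deletion_set {0..<n'} E' VH EH S = (S = {t. t < n \<and> b t})"
    proof
      assume "min_deletion_set {0..<n'} E' VH EH S"
      then show "S = {t. t < n \<and> b t}" using uniq unfolding V'_def B_def by blast
    next
      assume "S = {t. t < n \<and> b t}"
      then show "min_deletion_set {0..<n'} E' VH EH S" using Bmin unfolding V'_def B_def by simp
    qed
  qed
qed

end
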